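(* Let $G$ be a subgroup of $S_n$, $\chi$ a character of $G$ and $\theta\in S_n$. Then $$d_\chi^G(P_\theta+P_{\theta^{-1}})=2^{F+2t}\,d_\chi^G(S_\theta),$$ where $F$ is the number of fixed points of $\theta$ and $t$ is the number of transpositions (2-cycles) in the disjoint cycles expression of $\theta$.
   Context: $d_\chi^G(A)=\sum_{\sigma\in G}\chi(\sigma)\prod_{i=1}^nA_{i\,\sigma(i)}$, where $\chi$ is the trace of a finite-dimensional complex representation of $G$. For $\theta\in S_n$, $(P_\theta)_{ij}=1$ if $\theta^{-1}(i)=j$ and $0$ otherwise. $S_\theta$ is the $n\times n$ symmetric $0/1$ matrix with $(S_\theta)_{ij}=1$ if $\theta(i)=j$ or $\theta^{-1}(i)=j$, and $0$ otherwise. *)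

theory Defs
  imports "HOL-Analysis.Analysis" "HOL-Algebra.Sym_Groups"
begin

text \<open>S_n is realised as sym_group n: permutations of {1..n}, multiplication is composition.\<close>

definition is_rep :: "(nat \<Rightarrow> nat) set \<Rightarrow> ((nat \<Rightarrow> nat) \<Rightarrow> complex^'d^'d) \<Rightarrow> bool" where
  "is_rep G \<rho> \<longleftrightarrow> \<rho> id = mat 1 \<and> (\<forall>\<sigma>\<in>G. \<forall>\<tau>\<in>G. \<rho> (\<sigma> \<circ> \<tau>) = \<rho> \<sigma> ** \<rho> \<tau>)"

definition dchi :: "nat \<Rightarrow> (nat \<Rightarrow> nat) set \<Rightarrow> ((nat \<Rightarrow> nat) \<Rightarrow> complex) \<Rightarrow> (nat \<Rightarrow> nat \<Rightarrow> complex) \<Rightarrow> complex" where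
  "dchi n G chr A = (\<Sum>\<sigma>\<in>G. chr \<sigma> * (\<Prod>i\<in>{1..n}. A i (\<sigma> i)))"

definition perm_mat :: "(nat \<Rightarrow> nat) \<Rightarrow> nat \<Rightarrow> nat \<Rightarrow> complex" where
  "perm_mat \<theta> i j = (if inv_into UNIV \<theta> i = j then 1 else 0)"

definition sym_perm_mat :: "(nat \<Rightarrow> nat) \<Rightarrow> nat \<Rightarrow> nat \<Rightarrow> complex" where
  "sym_perm_mat \<theta> i j = (if \<theta> i = j \<or> inv_into UNIV \<theta> i = j then 1 else 0)"

definition num_fixed :: "nat \<Rightarrow> (nat \<Rightarrow> nat) \<Rightarrow> nat" where
  "num_fixed n \<theta> = card {i \<in> {1..n}. \<theta> i = i}"

definition num_2cycles :: "nat \<Rightarrow> (nat \<Rightarrow> nat) \<Rightarrow> nat" where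
  "num_2cycles n \<theta> = card {{i, \<theta> i} | i. i \<in> {1..n} \<and> \<theta> i \<noteq> i \<and> \<theta> (\<theta> i) = i}"

end

theory Submission
  imports Defs
begin

lemma entry_eq:
  assumes "bij \<theta>"
  shows "perm_mat \<theta> i j + perm_mat (inv_into UNIV \<theta>) i j
        = sym_perm_mat \<theta> i j * (if \<theta> (\<theta> i) = i then 2 else 1)"
proof -
  have iv: "inv_into UNIV (inv_into UNIV \<theta>) = \<theta>"
    using assms by (simp add: inv_inv_eq bij_is_surj bij_is_inj)
  have a: "\<theta> (inv_into UNIV \<theta> x) = x" for x using assms by (simp add: bij_is_surj f_inv_into_f)
  have b: "inv_into UNIV \<theta> (\<theta> x) = x" for x using assms by (simp add: bij_is_inj)
  have c: "(\<theta> (\<theta> i) = i) = (\<theta> i = inv_into UNIV \<theta> i)"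
    using a b by metis
  show ?thesis
    unfolding perm_mat_def sym_perm_mat_def iv c by auto
qed

lemma card_T:
  assumes p: "\<theta> permutes {1..n}"
  shows "card {i\<in>{1..n}. \<theta> (\<theta> i) = i} = num_fixed n \<theta> + 2 * num_2cycles n \<theta>"
proof -
  define Fx where "Fx = {i \<in> {1..n}. \<theta> i = i}"
  define Tw where "Tw = {i \<in> {1..n}. \<theta> i \<noteq> i \<and> \<theta> (\<theta> i) = i}"
  define C where "C = {{i, \<theta> i} | i. i \<in> {1..n} \<and> \<theta> i \<noteq> i \<and> \<theta> (\<theta> i) = i}"
  have inj: "inj \<theta>" by (rule permutes_inj[OF p])
  have img: "\<theta> i \<in> {1..n} \<longleftrightarrow> i \<in> {1..n}" for i by (rule permutes_in_image[OF p])
  have split: "{i\<in>{1..n}. \<theta> (\<theta> i) = i} = Fx \<union> Tw" unfolding Fx_def Tw_def by auto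
  have disj: "Fx \<inter> Tw = {}" unfolding Fx_def Tw_def by auto
  have UC: "\<Union>C = Tw"
  proof
    show "\<Union>C \<subseteq> Tw"
    proof
      fix x assume "x \<in> \<Union>C"
      then obtain i where i: "i \<in> {1..n}" "\<theta> i \<noteq> i" "\<theta> (\<theta> i) = i" "x = i \<or> x = \<theta> i"
        unfolding C_def by blast
      have "\<theta> i \<in> {1..n}" using img i(1) by blast
      then show "x \<in> Tw" using i unfolding Tw_def by auto
    qed
    show "Tw \<subseteq> \<Union>C"
    proof
      fix x assume "x \<in> Tw"
      then have "{x, \<theta> x} \<in> C" unfolding Tw_def C_def by blast
      then show "x \<in> \<Union>C" by blast
    qed
  qed
  have finC: "finite C"
  proof -
    have "C = (\<lambda>i. {i, \<theta> i}) ` Tw" unfolding C_def Tw_def by auto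
    then show ?thesis unfolding Tw_def by simp
  qed
  have card2: "\<forall>c\<in>C. card c = 2" unfolding C_def by auto
  have dis: "\<forall>c1\<in>C. \<forall>c2\<in>C. c1 \<noteq> c2 \<longrightarrow> c1 \<inter> c2 = {}"
  proof (intro ballI impI)
    fix c1 c2 assume c1: "c1 \<in> C" and c2: "c2 \<in> C" and ne: "c1 \<noteq> c2"
    from c1 obtain i where i: "c1 = {i, \<theta> i}" "\<theta> (\<theta> i) = i" unfolding C_def by auto
    from c2 obtain k where k: "c2 = {k, \<theta> k}" "\<theta> (\<theta> k) = k" unfolding C_def by auto
    show "c1 \<inter> c2 = {}"
    proof (rule ccontr)
      assume "c1 \<inter> c2 \<noteq> {}"
      then have "i = k \<or> i = \<theta> k \<or> \<theta> i = k \<or> \<theta> i = \<theta> k" using i(1) k(1) by blast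
      then have "c1 = c2"
      proof (elim disjE)
        assume "i = k" then show ?thesis using i k by simp
      next
        assume h: "i = \<theta> k" then show ?thesis using i k by (simp add: insert_commute)
      next
        assume h: "\<theta> i = k"
        then have "\<theta> k = i" using i(2) by simp
        then show ?thesis using i k h by (simp add: insert_commute)
      next
        assume "\<theta> i = \<theta> k" then have "i = k" using inj by (simp add: inj_eq)
        then show ?thesis using i k by simp
      qed
      with ne show False by simp
    qed
  qed
  have "2 * card C = card Tw"
  proof -
    have fU: "finite (\<Union>C)" unfolding UC Tw_def by simp
    have "2 * card C = card (\<Union>C)"
      by (rule card_partition[OF finC fU]) (use card2 dis in auto)
    then show ?thesis unfolding UC .
  qed
  moreover have "card (Fx \<union> Tw) = card Fx + card Tw"
    using disj by (intro card_Un_disjoint) (auto simp: Fx_def Tw_def)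
  ultimately show ?thesis
    using split unfolding num_fixed_def num_2cycles_def Fx_def[symmetric] C_def[symmetric] by simp
qed

theorem mainTheorem10:
  fixes n :: nat and G :: "(nat \<Rightarrow> nat) set" and chr :: "(nat \<Rightarrow> nat) \<Rightarrow> complex"
    and \<rho> :: "(nat \<Rightarrow> nat) \<Rightarrow> complex^'d^'d" and \<theta> :: "nat \<Rightarrow> nat"
  assumes "subgroup G (sym_group n)"
    and "is_rep G \<rho>"
    and "\<forall>\<sigma>\<in>G. chr \<sigma> = trace (\<rho> \<sigma>)"
    and "\<theta> permutes {1..n}"
  shows "dchi n G chr (\<lambda>i j. perm_mat \<theta> i j + perm_mat (inv_into UNIV \<theta>) i j)
         = 2 ^ (num_fixed n \<theta> + 2 * num_2cycles n \<theta>) * dchi n G chr (sym_perm_mat \<theta>)"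
proof -
  have bij: "bij \<theta>" by (rule permutes_bij[OF assms(4)])
  define T where "T = {i\<in>{1..n}. \<theta> (\<theta> i) = i}"
  have pc: "(\<Prod>i\<in>{1..n}. (if \<theta> (\<theta> i) = i then 2 else 1 :: complex)) = 2 ^ card T"
  proof -
    have "(\<Prod>i\<in>{1..n}. (if \<theta> (\<theta> i) = i then 2 else 1 :: complex))
        = (\<Prod>i\<in>{1..n} \<inter> {x. \<theta> (\<theta> x) = x}. 2) * (\<Prod>i\<in>{1..n} \<inter> - {x. \<theta> (\<theta> x) = x}. 1)"
      by (rule prod.If_cases) simp
    also have "{1..n} \<inter> {x. \<theta> (\<theta> x) = x} = T" unfolding T_def by auto
    finally show ?thesis by simp
  qed
  have row: "(\<Prod>i\<in>{1..n}. perm_mat \<theta> i (\<sigma> i) + perm_mat (inv_into UNIV \<theta>) i (\<sigma> i))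
      = 2 ^ card T * (\<Prod>i\<in>{1..n}. sym_perm_mat \<theta> i (\<sigma> i))" for \<sigma>
    unfolding entry_eq[OF bij] prod.distrib pc by (rule mult.commute)
  show ?thesis
    unfolding dchi_def row card_T[OF assms(4), folded T_def]
    by (simp add: sum_distrib_left mult_ac)
qed

end
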